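(* (Knaster–Tarski proof principle) Let $\mathscr{S}$ be an expressivity situation and $x\colon X\to BX$ a $B$-coalgebra. If the set $\{[\![\varphi]\!]_x\mid\varphi\in L_{\mathscr{S}}\}\subseteq\mathcal{C}(X,\Omega)$ is an approximating family, then $\mathscr{S}$ is expressive for $x$, i.e. $\nu\bigl(x^*\circ\overline{B}^{\underline{\Omega},\tau}\bigr)\sqsupseteq\bigwedge_{\varphi\in L_{\mathscr{S}}}[\![\varphi]\!]_x^{*}\underline{\Omega}$.
   Context: An expressivity situation $\mathscr{S}=(p,B,\Omega,\underline{\Omega},\Sigma,\Lambda,(f_\sigma),(\tau_\lambda))$ consists of: a fibration $p\colon\mathcal{E}\to\mathcal{C}$ whose fibers $\mathcal{E}_X$ are complete lattices (order $\sqsubseteq$, meets $\bigwedge$) with meet-preserving reindexing $f^*$; a functor $B\colon\mathcal{C}\to\mathcal{C}$; $\Omega\in\mathcal{C}$ with finite powers and $\underline{\Omega}\in\mathcal{E}$ above $\Omega$; a ranked alphabet $\Sigma$ with arrows $f_\sigma\colon\Omega^{\mathrm{rank}(\sigma)}\to\Omega$ each lifting to some $g_\sigma\colon\underline{\Omega}^{\mathrm{rank}(\sigma)}\to\underline{\Omega}$ with $pg_\sigma=f_\sigma$; a set $\Lambda$ and arrows $\tau_\lambda\colon B\Omega\to\Omega$. Formulas of $L_{\mathscr{S}}$: $\varphi::=\sigma(\varphi_1,\dots,\varphi_{\mathrm{rank}(\sigma)})\mid\heartsuit_\lambda\varphi$, with semantics $[\![\sigma(\varphi_1,\dots)]\!]_x=f_\sigma\circ\langle[\![\varphi_1]\!]_x,\dots\rangle$,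 $[\![\heartsuit_\lambda\varphi]\!]_x=\tau_\lambda\circ B[\![\varphi]\!]_x\circ x$. Codensity lifting: $\overline{B}^{\underline{\Omega},\tau}P=\bigwedge_{\lambda\in\Lambda,\,h\in\mathcal{E}(P,\underline{\Omega})}(\tau_\lambda\circ B(ph))^*\underline{\Omega}$; codensity bisimilarity is the greatest fixed point $\nu(x^*\circ\overline{B}^{\underline{\Omega},\tau})$ in $\mathcal{E}_X$. A subset $S\subseteq\mathcal{C}(X,\Omega)$ is an approximating family if for every $\mathcal{E}$-arrow $h\colon\bigwedge_{k\in S}k^*\underline{\Omega}\to\underline{\Omega}$ and every $\lambda\in\Lambda$, $\bigwedge_{k'\in S,\lambda'\in\Lambda}(\tau_{\lambda'}\circ Bk')^*\underline{\Omega}\sqsubseteq(\tau_\lambda\circ B(ph))^*\underline{\Omega}$. *)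

theory Defs
  imports Main
begin

record ('o, 'a) cat =
  Ob    :: "'o set"
  Hom   :: "'o \<Rightarrow> 'o \<Rightarrow> 'a set"
  comp  :: "'a \<Rightarrow> 'a \<Rightarrow> 'a"    (* comp C g f = g \<circ> f *)
  ident :: "'o \<Rightarrow> 'a"

definition category :: "('o, 'a) cat \<Rightarrow> bool" where
  "category C \<longleftrightarrow>
     (\<forall>X Y. \<forall>f \<in> Hom C X Y. X \<in> Ob C \<and> Y \<in> Ob C) \<and>
     (\<forall>X Y X' Y'. \<forall>f. f \<in> Hom C X Y \<and> f \<in> Hom C X' Y' \<longrightarrow> X = X' \<and> Y = Y') \<and>
     (\<forall>X Y Z f g. f \<in> Hom C X Y \<and> g \<in> Hom C Y Z \<longrightarrow> comp C g f \<in> Hom C X Z) \<and>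
     (\<forall>W X Y Z f g h. f \<in> Hom C W X \<and> g \<in> Hom C X Y \<and> h \<in> Hom C Y Z \<longrightarrow>
          comp C h (comp C g f) = comp C (comp C h g) f) \<and>
     (\<forall>X \<in> Ob C. ident C X \<in> Hom C X X) \<and>
     (\<forall>X Y f. f \<in> Hom C X Y \<longrightarrow> comp C f (ident C X) = f \<and> comp C (ident C Y) f = f)"

definition endofunctor :: "('o, 'a) cat \<Rightarrow> ('o \<Rightarrow> 'o) \<Rightarrow> ('a \<Rightarrow> 'a) \<Rightarrow> bool" where
  "endofunctor C Bo Ba \<longleftrightarrow>
     (\<forall>X \<in> Ob C. Bo X \<in> Ob C) \<and>
     (\<forall>X Y f. f \<in> Hom C X Y \<longrightarrow> Ba f \<in> Hom C (Bo X) (Bo Y)) \<and>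
     (\<forall>X Y Z f g. f \<in> Hom C X Y \<and> g \<in> Hom C Y Z \<longrightarrow> Ba (comp C g f) = comp C (Ba g) (Ba f)) \<and>
     (\<forall>X \<in> Ob C. Ba (ident C X) = ident C (Bo X))"

definition finite_powers ::
  "('o, 'a) cat \<Rightarrow> 'o \<Rightarrow> (nat \<Rightarrow> 'o) \<Rightarrow> (nat \<Rightarrow> nat \<Rightarrow> 'a) \<Rightarrow> ('o \<Rightarrow> 'a list \<Rightarrow> 'a) \<Rightarrow> bool" where
  "finite_powers C W pw prj tup \<longleftrightarrow>
     (\<forall>n. pw n \<in> Ob C) \<and>
     (\<forall>n i. i < n \<longrightarrow> prj n i \<in> Hom C (pw n) W) \<and>
     (\<forall>X \<in> Ob C. \<forall>fs. (\<forall>f \<in> set fs. f \<in> Hom C X W) \<longrightarrow>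
         tup X fs \<in> Hom C X (pw (length fs)) \<and>
         (\<forall>i < length fs. comp C (prj (length fs) i) (tup X fs) = fs ! i) \<and>
         (\<forall>u \<in> Hom C X (pw (length fs)).
             (\<forall>i < length fs. comp C (prj (length fs) i) u = fs ! i) \<longrightarrow> u = tup X fs))"

text \<open>A fibration p whose fibers are complete lattices (posets) is given, up to
  equivalence, by its fibers E_X, the fiber orders and the reindexing maps f^*.
  E-arrows P -> Q above f : X -> Y correspond exactly to the inequalities
  P below f^* Q (there is at most one such arrow, since fibers are thin).\<close>

record ('o, 'a, 'e) fibr =
  Fib :: "'o \<Rightarrow> 'e set"
  le  :: "'e \<Rightarrow> 'e \<Rightarrow> bool"
  rdx :: "'a \<Rightarrow> 'e \<Rightarrow> 'e"

definition is_meet :: "('o, 'a, 'e) fibr \<Rightarrow> 'o \<Rightarrow> 'e set \<Rightarrow> 'e \<Rightarrow> bool" where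
  "is_meet p X S m \<longleftrightarrow> m \<in> Fib p X \<and> (\<forall>s \<in> S. le p m s) \<and>
     (\<forall>m' \<in> Fib p X. (\<forall>s \<in> S. le p m' s) \<longrightarrow> le p m' m)"

definition fmeet :: "('o, 'a, 'e) fibr \<Rightarrow> 'o \<Rightarrow> 'e set \<Rightarrow> 'e" where
  "fmeet p X S = (THE m. is_meet p X S m)"

definition clat_fibration :: "('o, 'a) cat \<Rightarrow> ('o, 'a, 'e) fibr \<Rightarrow> bool" where
  "clat_fibration C p \<longleftrightarrow>
     (\<forall>X \<in> Ob C. \<forall>P \<in> Fib p X. le p P P) \<and>
     (\<forall>X \<in> Ob C. \<forall>P \<in> Fib p X. \<forall>Q \<in> Fib p X. le p P Q \<and> le p Q P \<longrightarrow> P = Q) \<and>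
     (\<forall>X \<in> Ob C. \<forall>P \<in> Fib p X. \<forall>Q \<in> Fib p X. \<forall>R \<in> Fib p X.
          le p P Q \<and> le p Q R \<longrightarrow> le p P R) \<and>
     (\<forall>X \<in> Ob C. \<forall>S \<subseteq> Fib p X. \<exists>m. is_meet p X S m) \<and>
     (\<forall>X Y f. f \<in> Hom C X Y \<longrightarrow> (\<forall>P \<in> Fib p Y. rdx p f P \<in> Fib p X)) \<and>
     (\<forall>X Y f. f \<in> Hom C X Y \<longrightarrow>
          (\<forall>S \<subseteq> Fib p Y. rdx p f (fmeet p Y S) = fmeet p X (rdx p f ` S))) \<and>
     (\<forall>X \<in> Ob C. \<forall>P \<in> Fib p X. rdx p (ident C X) P = P) \<and>
     (\<forall>X Y Z f g. f \<in> Hom C X Y \<and> g \<in> Hom C Y Z \<longrightarrow>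
          (\<forall>P \<in> Fib p Z. rdx p (comp C g f) P = rdx p f (rdx p g P)))"

definition expressivity_situation ::
  "('o, 'a) cat \<Rightarrow> ('o, 'a, 'e) fibr \<Rightarrow> ('o \<Rightarrow> 'o) \<Rightarrow> ('a \<Rightarrow> 'a) \<Rightarrow>
   'o \<Rightarrow> (nat \<Rightarrow> 'o) \<Rightarrow> (nat \<Rightarrow> nat \<Rightarrow> 'a) \<Rightarrow> ('o \<Rightarrow> 'a list \<Rightarrow> 'a) \<Rightarrow> 'e \<Rightarrow>
   ('s \<Rightarrow> nat) \<Rightarrow> ('s \<Rightarrow> 'a) \<Rightarrow> ('l \<Rightarrow> 'a) \<Rightarrow> bool" where
  "expressivity_situation C p Bo Ba W pw prj tup Wl rank fsig tau \<longleftrightarrow>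
     category C \<and> clat_fibration C p \<and> endofunctor C Bo Ba \<and>
     W \<in> Ob C \<and> finite_powers C W pw prj tup \<and> Wl \<in> Fib p W \<and>
     (\<forall>\<sigma>. fsig \<sigma> \<in> Hom C (pw (rank \<sigma>)) W \<and>
        \<comment> \<open>f_sigma lifts to an E-arrow from the power of Wl (the meet of the
            reindexed copies of Wl along the projections) to Wl\<close>
        le p (fmeet p (pw (rank \<sigma>)) {rdx p (prj (rank \<sigma>) i) Wl | i. i < rank \<sigma>})
             (rdx p (fsig \<sigma>) Wl)) \<and>
     (\<forall>l. tau l \<in> Hom C (Bo W) W)"

datatype ('s, 'l) form = Op 's "('s, 'l) form list" | Mod 'l "('s, 'l) form"

fun wf_form :: "('s \<Rightarrow> nat) \<Rightarrow> ('s, 'l) form \<Rightarrow> bool" where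
  "wf_form rank (Op \<sigma> \<phi>s) \<longleftrightarrow> length \<phi>s = rank \<sigma> \<and> (\<forall>\<phi> \<in> set \<phi>s. wf_form rank \<phi>)"
| "wf_form rank (Mod l \<phi>) \<longleftrightarrow> wf_form rank \<phi>"

fun sem :: "('o, 'a) cat \<Rightarrow> ('a \<Rightarrow> 'a) \<Rightarrow> ('o \<Rightarrow> 'a list \<Rightarrow> 'a) \<Rightarrow> ('s \<Rightarrow> 'a) \<Rightarrow> ('l \<Rightarrow> 'a) \<Rightarrow>
            'o \<Rightarrow> 'a \<Rightarrow> ('s, 'l) form \<Rightarrow> 'a" where
  "sem C Ba tup fsig tau X x (Op \<sigma> \<phi>s) =
     comp C (fsig \<sigma>) (tup X (map (sem C Ba tup fsig tau X x) \<phi>s))"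
| "sem C Ba tup fsig tau X x (Mod l \<phi>) =
     comp C (tau l) (comp C (Ba (sem C Ba tup fsig tau X x \<phi>)) x)"

text \<open>codensity lifting of P in E_X: meet over lambda and E-arrows h : P -> Wl,
  the latter represented by their projections k = p h, i.e. k : X -> W with
  P below k^* Wl.\<close>

definition codensity_lifting ::
  "('o, 'a) cat \<Rightarrow> ('o, 'a, 'e) fibr \<Rightarrow> ('o \<Rightarrow> 'o) \<Rightarrow> ('a \<Rightarrow> 'a) \<Rightarrow> 'o \<Rightarrow> 'e \<Rightarrow>
   ('l \<Rightarrow> 'a) \<Rightarrow> 'o \<Rightarrow> 'e \<Rightarrow> 'e" where
  "codensity_lifting C p Bo Ba W Wl tau X P =
     fmeet p (Bo X) {rdx p (comp C (tau l) (Ba k)) Wl | l k.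
                       k \<in> Hom C X W \<and> le p P (rdx p k Wl)}"

definition fgfp :: "('o, 'a, 'e) fibr \<Rightarrow> 'o \<Rightarrow> ('e \<Rightarrow> 'e) \<Rightarrow> 'e" where
  "fgfp p X F = (THE R. R \<in> Fib p X \<and> F R = R \<and>
                        (\<forall>S \<in> Fib p X. F S = S \<longrightarrow> le p S R))"

definition codensity_bisim ::
  "('o, 'a) cat \<Rightarrow> ('o, 'a, 'e) fibr \<Rightarrow> ('o \<Rightarrow> 'o) \<Rightarrow> ('a \<Rightarrow> 'a) \<Rightarrow> 'o \<Rightarrow> 'e \<Rightarrow>
   ('l \<Rightarrow> 'a) \<Rightarrow> 'o \<Rightarrow> 'a \<Rightarrow> 'e" where
  "codensity_bisim C p Bo Ba W Wl tau X x =
     fgfp p X (\<lambda>R. rdx p x (codensity_lifting C p Bo Ba W Wl tau X R))"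

definition approximating_family ::
  "('o, 'a) cat \<Rightarrow> ('o, 'a, 'e) fibr \<Rightarrow> ('o \<Rightarrow> 'o) \<Rightarrow> ('a \<Rightarrow> 'a) \<Rightarrow> 'o \<Rightarrow> 'e \<Rightarrow>
   ('l \<Rightarrow> 'a) \<Rightarrow> 'o \<Rightarrow> 'a set \<Rightarrow> bool" where
  "approximating_family C p Bo Ba W Wl tau X S \<longleftrightarrow>
     S \<subseteq> Hom C X W \<and>
     (\<forall>h \<in> Hom C X W. le p (fmeet p X {rdx p k Wl | k. k \<in> S}) (rdx p h Wl) \<longrightarrow>
        (\<forall>l. le p (fmeet p (Bo X) {rdx p (comp C (tau l') (Ba k')) Wl | k' l'. k' \<in> S})
                    (rdx p (comp C (tau l) (Ba h)) Wl)))"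

end

theory Submission
  imports Defs
begin

lemma kt_gfp:
  fixes le :: "'e \<Rightarrow> 'e \<Rightarrow> bool"
  assumes refl: "\<forall>P\<in>A. le P P"
    and antisym: "\<forall>P\<in>A. \<forall>Q\<in>A. le P Q \<and> le Q P \<longrightarrow> P = Q"
    and trans: "\<forall>P\<in>A. \<forall>Q\<in>A. \<forall>R\<in>A. le P Q \<and> le Q R \<longrightarrow> le P R"
    and meet: "\<And>S. S \<subseteq> A \<Longrightarrow> \<exists>m\<in>A. (\<forall>s\<in>S. le m s) \<and> (\<forall>m'\<in>A. (\<forall>s\<in>S. le m' s) \<longrightarrow> le m' m)"
    and Fin: "\<And>R. R \<in> A \<Longrightarrow> F R \<in> A"
    and mono: "\<And>R R'. R \<in> A \<Longrightarrow> R' \<in> A \<Longrightarrow> le R R' \<Longrightarrow> le (F R) (F R')"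
    and m: "m \<in> A" "le m (F m)"
  shows "\<exists>u. u \<in> A \<and> F u = u \<and> (\<forall>S\<in>A. F S = S \<longrightarrow> le S u) \<and> le m u"
proof -
  define Post where "Post = {s\<in>A. le s (F s)}"
  define U where "U = {v\<in>A. \<forall>s\<in>Post. le s v}"
  obtain u where u: "u \<in> A" "\<forall>s\<in>U. le u s" "\<forall>m'\<in>A. (\<forall>s\<in>U. le m' s) \<longrightarrow> le m' u"
    using meet[of U] unfolding U_def by blast
  have sle: "le s u" if "s \<in> Post" for s
    using u(3) that unfolding U_def Post_def by auto
  have FuU: "F u \<in> U"
  proof -
    have "le s (F u)" if "s \<in> Post" for s
    proof -
      have "s \<in> A" "le s (F s)" using that Post_def by auto
      moreover have "le (F s) (F u)" using mono[OF \<open>s\<in>A\<close> u(1) sle[OF that]] .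
      ultimately show ?thesis using trans Fin u(1) by blast
    qed
    then show ?thesis unfolding U_def using Fin u(1) by auto
  qed
  have uFu: "le u (F u)" using u(2) FuU by blast
  have "F u \<in> Post" unfolding Post_def using Fin u(1) mono[OF u(1) Fin[OF u(1)] uFu] by auto
  then have "le (F u) u" using sle by blast
  then have fixu: "F u = u" using antisym uFu Fin u(1) by blast
  have "\<forall>S\<in>A. F S = S \<longrightarrow> le S u"
    using sle refl unfolding Post_def by auto
  moreover have "le m u" using sle m unfolding Post_def by auto
  ultimately show ?thesis using u(1) fixu by blast
qed

lemma clat_refl:
  assumes "clat_fibration C p"
  shows "\<forall>X \<in> Ob C. \<forall>P \<in> Fib p X. le p P P"
  using assms unfolding clat_fibration_def
  apply (elim conjE)
  apply assumption
  done

lemma clat_anti: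
  assumes "clat_fibration C p"
  shows "\<forall>X \<in> Ob C. \<forall>P \<in> Fib p X. \<forall>Q \<in> Fib p X. le p P Q \<and> le p Q P \<longrightarrow> P = Q"
  using assms unfolding clat_fibration_def
  apply (elim conjE)
  apply assumption
  done

lemma clat_trans:
  assumes "clat_fibration C p"
  shows "\<forall>X \<in> Ob C. \<forall>P \<in> Fib p X. \<forall>Q \<in> Fib p X. \<forall>R \<in> Fib p X.
          le p P Q \<and> le p Q R \<longrightarrow> le p P R"
  using assms unfolding clat_fibration_def
  apply (elim conjE)
  apply assumption
  done

lemma clat_meet:
  assumes "clat_fibration C p"
  shows "\<forall>X \<in> Ob C. \<forall>S \<subseteq> Fib p X. \<exists>m. is_meet p X S m"
  using assms unfolding clat_fibration_def
  apply (elim conjE)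
  apply assumption
  done

lemma clat_rdx:
  assumes "clat_fibration C p"
  shows "\<forall>X Y f. f \<in> Hom C X Y \<longrightarrow> (\<forall>P \<in> Fib p Y. rdx p f P \<in> Fib p X)"
  using assms unfolding clat_fibration_def
  apply (elim conjE)
  apply assumption
  done

lemma clat_rmeet:
  assumes "clat_fibration C p"
  shows "\<forall>X Y f. f \<in> Hom C X Y \<longrightarrow>
          (\<forall>S \<subseteq> Fib p Y. rdx p f (fmeet p Y S) = fmeet p X (rdx p f ` S))"
  using assms unfolding clat_fibration_def
  apply (elim conjE)
  apply assumption
  done

lemma clat_rcomp:
  assumes "clat_fibration C p"
  shows "\<forall>X Y Z f g. f \<in> Hom C X Y \<and> g \<in> Hom C Y Z \<longrightarrow>
          (\<forall>P \<in> Fib p Z. rdx p (comp C g f) P = rdx p f (rdx p g P))"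
  using assms unfolding clat_fibration_def
  apply (elim conjE)
  apply assumption
  done

lemma cat_ob:
  assumes "category C"
  shows "\<forall>X Y. \<forall>f \<in> Hom C X Y. X \<in> Ob C \<and> Y \<in> Ob C"
  using assms unfolding category_def
  apply (elim conjE)
  apply assumption
  done

lemma cat_comp:
  assumes "category C"
  shows "\<forall>X Y Z f g. f \<in> Hom C X Y \<and> g \<in> Hom C Y Z \<longrightarrow> comp C g f \<in> Hom C X Z"
  using assms unfolding category_def
  apply (elim conjE)
  apply assumption
  done

lemma cat_assoc:
  assumes "category C"
  shows "\<forall>W X Y Z f g h. f \<in> Hom C W X \<and> g \<in> Hom C X Y \<and> h \<in> Hom C Y Z \<longrightarrow>
          comp C h (comp C g f) = comp C (comp C h g) f"
  using assms unfolding category_def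
  apply (elim conjE)
  apply assumption
  done

lemma fmeet_is_meet:
  assumes "clat_fibration C p" "X \<in> Ob C" "S \<subseteq> Fib p X"
  shows "is_meet p X S (fmeet p X S)"
proof -
  obtain m where m: "is_meet p X S m" using clat_meet[OF assms(1)] assms(2,3) by blast
  have "m' = m" if "is_meet p X S m'" for m'
    using that m clat_anti[OF assms(1)] assms(2) unfolding is_meet_def by blast
  then show ?thesis unfolding fmeet_def using m by (metis theI)
qed

lemma rdx_mono:
  assumes "category C" "clat_fibration C p" "f \<in> Hom C X Y" "P \<in> Fib p Y" "Q \<in> Fib p Y" "le p P Q"
  shows "le p (rdx p f P) (rdx p f Q)"
proof -
  note c1 = cat_ob[OF assms(1)]
  have XY0: "X \<in> Ob C \<and> Y \<in> Ob C" using c1 assms(3) by blast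
  then have XY: "X \<in> Ob C" "Y \<in> Ob C" by auto
  have "is_meet p Y {P, Q} P"
    using assms(4,5,6) clat_refl[OF assms(2)] XY unfolding is_meet_def by blast
  moreover have "is_meet p Y {P, Q} (fmeet p Y {P,Q})"
    using fmeet_is_meet[OF assms(2) XY(2)] assms by auto
  ultimately have eq: "fmeet p Y {P,Q} = P"
    using clat_anti[OF assms(2)] XY unfolding is_meet_def by blast
  have "rdx p f P = fmeet p X (rdx p f ` {P,Q})"
    using clat_rmeet[OF assms(2)] assms(3,4,5) eq by (metis empty_subsetI insert_subset)
  moreover have "rdx p f ` {P,Q} \<subseteq> Fib p X" using clat_rdx[OF assms(2)] assms(3,4,5) by blast
  ultimately show ?thesis using fmeet_is_meet[OF assms(2) XY(1), of "rdx p f ` {P,Q}"] unfolding is_meet_def by auto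
qed

lemma fp_tup:
  assumes "finite_powers C W pw prj tup" "X \<in> Ob C" "\<forall>f \<in> set fs. f \<in> Hom C X W"
  shows "tup X fs \<in> Hom C X (pw (length fs))"
proof -
  have "\<forall>X \<in> Ob C. \<forall>fs. (\<forall>f \<in> set fs. f \<in> Hom C X W) \<longrightarrow>
         tup X fs \<in> Hom C X (pw (length fs)) \<and>
         (\<forall>i < length fs. comp C (prj (length fs) i) (tup X fs) = fs ! i) \<and>
         (\<forall>u \<in> Hom C X (pw (length fs)).
             (\<forall>i < length fs. comp C (prj (length fs) i) u = fs ! i) \<longrightarrow> u = tup X fs)"
    using assms(1) unfolding finite_powers_def
    apply (elim conjE)
    apply assumption
    done
  then show ?thesis using assms(2,3) by blast
qed

lemma sem_hom:
  assumes "category C" "endofunctor C Bo Ba" "finite_powers C W pw prj tup"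
    "\<forall>\<sigma>. fsig \<sigma> \<in> Hom C (pw (rank \<sigma>)) W" "\<forall>l. tau l \<in> Hom C (Bo W) W"
    "X \<in> Ob C" "x \<in> Hom C X (Bo X)"
  shows "wf_form rank \<phi> \<Longrightarrow> sem C Ba tup fsig tau X x \<phi> \<in> Hom C X W"
proof (induction \<phi>)
  case (Op \<sigma> \<phi>s)
  then have "\<forall>f\<in>set (map (sem C Ba tup fsig tau X x) \<phi>s). f \<in> Hom C X W" by auto
  then have "tup X (map (sem C Ba tup fsig tau X x) \<phi>s) \<in> Hom C X (pw (length (map (sem C Ba tup fsig tau X x) \<phi>s)))"
    using fp_tup[OF assms(3) assms(6)] by blast
  then have "tup X (map (sem C Ba tup fsig tau X x) \<phi>s) \<in> Hom C X (pw (rank \<sigma>))"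
    using Op.prems by simp
  then show ?case using assms(4) cat_comp[OF assms(1)] by (simp only: sem.simps) blast
next
  case (Mod l \<phi>)
  then have "Ba (sem C Ba tup fsig tau X x \<phi>) \<in> Hom C (Bo X) (Bo W)"
    using assms(2) unfolding endofunctor_def by auto
  then have "comp C (Ba (sem C Ba tup fsig tau X x \<phi>)) x \<in> Hom C X (Bo W)"
    using assms(7) cat_comp[OF assms(1)] by blast
  then show ?case using assms(5) cat_comp[OF assms(1)] by (simp only: sem.simps) blast
qed

theorem mainTheorem2:
  fixes C :: "('o, 'a) cat" and p :: "('o, 'a, 'e) fibr"
    and rank :: "'s \<Rightarrow> nat" and tau :: "'l \<Rightarrow> 'a"
  assumes "expressivity_situation C p Bo Ba W pw prj tup Wl rank fsig tau"
    and "X \<in> Ob C" and "x \<in> Hom C X (Bo X)"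
    and "approximating_family C p Bo Ba W Wl tau X
           {sem C Ba tup fsig tau X x \<phi> | \<phi>. wf_form rank \<phi>}"
  shows "le p (fmeet p X {rdx p (sem C Ba tup fsig tau X x \<phi>) Wl | \<phi>. wf_form rank \<phi>})
              (codensity_bisim C p Bo Ba W Wl tau X x)"
proof -
  note es = assms(1)[unfolded expressivity_situation_def]
  have cat: "category C" and cl: "clat_fibration C p" and en: "endofunctor C Bo Ba"
    and WO: "W \<in> Ob C" and fp: "finite_powers C W pw prj tup" and Wl: "Wl \<in> Fib p W"
    and fs: "\<forall>\<sigma>. fsig \<sigma> \<in> Hom C (pw (rank \<sigma>)) W" and tau: "\<forall>l. tau l \<in> Hom C (Bo W) W"
    using es by auto
  have trX: "\<forall>P\<in>Fib p X. \<forall>Q\<in>Fib p X. \<forall>R\<in>Fib p X. le p P Q \<and> le p Q R \<longrightarrow> le p P R"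
    using clat_trans[OF cl] assms(2) by blast
  have rmeet: "\<forall>X Y f. f \<in> Hom C X Y \<longrightarrow>
          (\<forall>S \<subseteq> Fib p Y. rdx p f (fmeet p Y S) = fmeet p X (rdx p f ` S))"
    using clat_rmeet[OF cl] .
  have rcomp: "\<forall>X Y Z f g. f \<in> Hom C X Y \<and> g \<in> Hom C Y Z \<longrightarrow>
          (\<forall>P \<in> Fib p Z. rdx p (comp C g f) P = rdx p f (rdx p g P))"
    using clat_rcomp[OF cl] .
  have BX: "Bo X \<in> Ob C" using en assms(2) unfolding endofunctor_def by auto
  let ?sem = "sem C Ba tup fsig tau X x"
  define S where "S = {?sem \<phi> | \<phi>. wf_form rank \<phi>}"
  have semh: "\<And>\<phi>. wf_form rank \<phi> \<Longrightarrow> ?sem \<phi> \<in> Hom C X W"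
    using sem_hom[OF cat en fp fs tau assms(2,3)] by blast
  have eqset: "{rdx p (?sem \<phi>) Wl | \<phi>. wf_form rank \<phi>} = {rdx p k Wl | k. k \<in> S}"
    unfolding S_def by auto
  have SH: "S \<subseteq> Hom C X W" unfolding S_def using semh by auto
  have rdxF: "\<And>f Y Z P. f \<in> Hom C Y Z \<Longrightarrow> P \<in> Fib p Z \<Longrightarrow> rdx p f P \<in> Fib p Y"
    using clat_rdx[OF cl] by blast
  define M where "M = fmeet p X {rdx p k Wl | k. k \<in> S}"
  have MS: "{rdx p k Wl | k. k \<in> S} \<subseteq> Fib p X" using SH rdxF Wl by blast
  have Mm: "is_meet p X {rdx p k Wl | k. k \<in> S} M"
    unfolding M_def using fmeet_is_meet[OF cl assms(2) MS] .
  have MF: "M \<in> Fib p X" using Mm unfolding is_meet_def by blast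
  have tkH: "\<And>l k. k \<in> Hom C X W \<Longrightarrow> comp C (tau l) (Ba k) \<in> Hom C (Bo X) W"
  proof -
    fix l k assume "k \<in> Hom C X W"
    then have "Ba k \<in> Hom C (Bo X) (Bo W)" using en unfolding endofunctor_def by auto
    then show "comp C (tau l) (Ba k) \<in> Hom C (Bo X) W" using cat_comp[OF cat] tau by blast
  qed
  define LS where "LS = (\<lambda>R. {rdx p (comp C (tau l) (Ba k)) Wl | l k.
                       k \<in> Hom C X W \<and> le p R (rdx p k Wl)})"
  have LSF: "\<And>R. LS R \<subseteq> Fib p (Bo X)" unfolding LS_def using tkH rdxF Wl by blast
  have Lm: "\<And>R. is_meet p (Bo X) (LS R) (codensity_lifting C p Bo Ba W Wl tau X R)"
    unfolding codensity_lifting_def using fmeet_is_meet[OF cl BX LSF[unfolded LS_def]] unfolding LS_def by blast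
  have LFg: "\<And>R. codensity_lifting C p Bo Ba W Wl tau X R \<in> Fib p (Bo X)"
    using Lm unfolding is_meet_def by blast
  define F where "F = (\<lambda>R. rdx p x (codensity_lifting C p Bo Ba W Wl tau X R))"
  have FF: "\<And>R. F R \<in> Fib p X" unfolding F_def using Lm rdxF assms(3) unfolding is_meet_def by blast
  have mono: "le p (F R) (F R')" if "R \<in> Fib p X" "R' \<in> Fib p X" "le p R R'" for R R'
  proof -
    have "LS R' \<subseteq> LS R"
    proof
      fix z assume "z \<in> LS R'"
      then obtain l k where z: "z = rdx p (comp C (tau l) (Ba k)) Wl" "k \<in> Hom C X W"
        "le p R' (rdx p k Wl)" unfolding LS_def by blast
      have "rdx p k Wl \<in> Fib p X" using z(2) rdxF Wl by blast
      then have "le p R (rdx p k Wl)" using trX that z(3) by blast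
      then show "z \<in> LS R" unfolding LS_def using z by blast
    qed
    then have "le p (codensity_lifting C p Bo Ba W Wl tau X R) (codensity_lifting C p Bo Ba W Wl tau X R')"
      using Lm[of R] Lm[of R'] unfolding is_meet_def by blast
    then show ?thesis unfolding F_def
      using rdx_mono[OF cat cl assms(3) LFg LFg] by blast
  qed
  define N where "N = fmeet p (Bo X) {rdx p (comp C (tau l') (Ba k')) Wl | k' l'. k' \<in> S}"
  have NS: "{rdx p (comp C (tau l') (Ba k')) Wl | k' l'. k' \<in> S} \<subseteq> Fib p (Bo X)"
    using SH tkH rdxF Wl by blast
  have Nm: "is_meet p (Bo X) {rdx p (comp C (tau l') (Ba k')) Wl | k' l'. k' \<in> S} N"
    unfolding N_def using fmeet_is_meet[OF cl BX NS] .
  have NF: "N \<in> Fib p (Bo X)" using Nm unfolding is_meet_def by blast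
  have apx: "\<forall>h \<in> Hom C X W. le p M (rdx p h Wl) \<longrightarrow>
        (\<forall>l. le p N (rdx p (comp C (tau l) (Ba h)) Wl))"
    using assms(4) unfolding approximating_family_def S_def[symmetric] M_def[symmetric] N_def[symmetric]
    by blast
  have NL: "le p N (codensity_lifting C p Bo Ba W Wl tau X M)"
  proof -
    have "\<forall>z\<in>LS M. le p N z" unfolding LS_def using apx by blast
    then show ?thesis using Lm[of M] NF unfolding is_meet_def by blast
  qed
  have LF: "codensity_lifting C p Bo Ba W Wl tau X M \<in> Fib p (Bo X)" using Lm unfolding is_meet_def by blast
  have xN: "le p (rdx p x N) (F M)" unfolding F_def
    using rdx_mono[OF cat cl assms(3) NF LF NL] .
  have xNeq: "rdx p x N = fmeet p X (rdx p x ` {rdx p (comp C (tau l') (Ba k')) Wl | k' l'. k' \<in> S})"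
    unfolding N_def using rmeet assms(3) NS by blast
  have xNS: "rdx p x ` {rdx p (comp C (tau l') (Ba k')) Wl | k' l'. k' \<in> S} \<subseteq> Fib p X"
    using NS rdxF assms(3) by blast
  have Mlow: "\<forall>z \<in> rdx p x ` {rdx p (comp C (tau l') (Ba k')) Wl | k' l'. k' \<in> S}. le p M z"
  proof
    fix z assume "z \<in> rdx p x ` {rdx p (comp C (tau l') (Ba k')) Wl | k' l'. k' \<in> S}"
    then obtain l \<phi> where z: "z = rdx p x (rdx p (comp C (tau l) (Ba (?sem \<phi>))) Wl)" "wf_form rank \<phi>"
      unfolding S_def by blast
    have h1: "?sem \<phi> \<in> Hom C X W" using semh z(2) .
    have h2: "Ba (?sem \<phi>) \<in> Hom C (Bo X) (Bo W)" using h1 en unfolding endofunctor_def by auto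
    have "z = rdx p (comp C (comp C (tau l) (Ba (?sem \<phi>))) x) Wl"
      using z(1) rcomp tkH[OF h1] assms(3) Wl by metis
    also have "\<dots> = rdx p (?sem (Mod l \<phi>)) Wl"
      using cat_assoc[OF cat] h2 assms(3) tau by simp metis
    finally have "z \<in> {rdx p k Wl | k. k \<in> S}" unfolding S_def using z(2)
      by (metis (mono_tags, lifting) mem_Collect_eq wf_form.simps(2))
    then show "le p M z" using Mm unfolding is_meet_def by blast
  qed
  have MxN: "le p M (rdx p x N)"
  proof -
    have im: "is_meet p X (rdx p x ` {rdx p (comp C (tau l') (Ba k')) Wl | k' l'. k' \<in> S})
       (fmeet p X (rdx p x ` {rdx p (comp C (tau l') (Ba k')) Wl | k' l'. k' \<in> S}))"
      using fmeet_is_meet[OF cl assms(2) xNS] .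
    have "le p M (fmeet p X (rdx p x ` {rdx p (comp C (tau l') (Ba k')) Wl | k' l'. k' \<in> S}))"
      using im MF Mlow unfolding is_meet_def by blast
    then show ?thesis using xNeq by simp
  qed
  have xNF: "rdx p x N \<in> Fib p X" using rdxF assms(3) NF by blast
  have post: "le p M (F M)" using trX MF xNF FF MxN xN by blast
  have refl: "\<forall>P\<in>Fib p X. le p P P" and anti: "\<forall>P\<in>Fib p X. \<forall>Q\<in>Fib p X. le p P Q \<and> le p Q P \<longrightarrow> P = Q"
    and tr: "\<forall>P\<in>Fib p X. \<forall>Q\<in>Fib p X. \<forall>R\<in>Fib p X. le p P Q \<and> le p Q R \<longrightarrow> le p P R"
    using clat_refl[OF cl] clat_anti[OF cl] clat_trans[OF cl] assms(2) by blast+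
  have mt: "\<exists>m\<in>Fib p X. (\<forall>s\<in>T. le p m s) \<and> (\<forall>m'\<in>Fib p X. (\<forall>s\<in>T. le p m' s) \<longrightarrow> le p m' m)"
    if "T \<subseteq> Fib p X" for T
    using fmeet_is_meet[OF cl assms(2) that] unfolding is_meet_def by blast
  obtain u where u: "u \<in> Fib p X" "F u = u" "\<forall>S\<in>Fib p X. F S = S \<longrightarrow> le p S u" "le p M u"
    using kt_gfp[where A="Fib p X" and le="le p" and F=F and m=M, OF refl anti tr mt FF mono MF post] by blast
  have "fgfp p X F = u" unfolding fgfp_def
  proof (rule the_equality)
    show "u \<in> Fib p X \<and> F u = u \<and> (\<forall>S\<in>Fib p X. F S = S \<longrightarrow> le p S u)" using u by blast
  next
    fix R assume "R \<in> Fib p X \<and> F R = R \<and> (\<forall>S\<in>Fib p X. F S = S \<longrightarrow> le p S R)"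
    then show "R = u" using u anti by blast
  qed
  then have "codensity_bisim C p Bo Ba W Wl tau X x = u"
    unfolding codensity_bisim_def F_def by simp
  then show ?thesis using u(4) eqset M_def by simp
qed

end
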